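(* Let $S$ be a connected surface without boundary, $K\subset S$ a compact connected set, and $U$ a residual domain of $K$. Let $\alpha:\,]0,1]\to U$ be a path such that $\lim_{t\to0}\alpha(t)=p\in K$ in $S$. Then there exists an ideal boundary point $b$ of $U$ which is relatively compact in $S$ such that $\lim_{t\to0}\alpha(t)=b$ in the ideal completion $B(U)$.
   Context: A residual domain of $K$ is a connected component of $S-K$. For a surface $X$, an ideal boundary component of $X$ is a decreasing sequence $V_1\supset V_2\supset\cdots$ of nonempty subsets of $X$ such that each $V_n$ is open in $X$ and connected, $cl_XV_n$ is not compact, $fr_XV_n$ is compact, and for every compact $C\subset X$ there is $n_0$ with $C\cap V_n=\emptyset$ for $n\ge n_0$; two such sequences $(V_n)$, $(V'_n)$ are equivalent if for every $n$ there is $m$ with $V_m\subset V'_n$, and vice versa. The ideal boundary $b(X)$ is the set of equivalence classes and $B(X)=X\sqcup b(X)$ is the ideal completion, with topology having as basis the sets $A\cup A'$, where $A\subset X$ is open connected with $fr_XA$ compact and $A'$ is the set of ideal boundary points represented by some $(V_n)$ with $V_n\subset A$ for all large $n$. An ideal boundary point of $U$ represented by $(V_n)$ is relatively compact in $S$ if some $V_n$ has compact closure in $S$. *)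

theory Defs
  imports "HOL-Analysis.Analysis"
begin

definition surface :: "'a topology \<Rightarrow> bool" where
  "surface S \<longleftrightarrow> Hausdorff_space S \<and> second_countable S \<and>
     (\<forall>x\<in>topspace S. \<exists>W. openin S W \<and> x \<in> W \<and>
        (\<exists>T::(real^2) set. open T \<and> subtopology S W homeomorphic_space top_of_set T))"

definition residual_domain :: "'a topology \<Rightarrow> 'a set \<Rightarrow> 'a set \<Rightarrow> bool" where
  "residual_domain S K U \<longleftrightarrow> U \<in> connected_components_of (subtopology S (topspace S - K))"

definition ideal_bdry_comp :: "'a topology \<Rightarrow> (nat \<Rightarrow> 'a set) \<Rightarrow> bool" where
  "ideal_bdry_comp X V \<longleftrightarrow>
     decseq V \<and>
     (\<forall>n. V n \<noteq> {} \<and> openin X (V n) \<and> connectedin X (V n) \<and>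
          \<not> compactin X (X closure_of (V n)) \<and> compactin X (X frontier_of (V n))) \<and>
     (\<forall>C. compactin X C \<longrightarrow> (\<exists>n0. \<forall>n\<ge>n0. C \<inter> V n = {}))"

definition ibc_equiv :: "(nat \<Rightarrow> 'a set) \<Rightarrow> (nat \<Rightarrow> 'a set) \<Rightarrow> bool" where
  "ibc_equiv V W \<longleftrightarrow> (\<forall>n. \<exists>m. V m \<subseteq> W n) \<and> (\<forall>n. \<exists>m. W m \<subseteq> V n)"

definition ideal_boundary :: "'a topology \<Rightarrow> (nat \<Rightarrow> 'a set) set set" where
  "ideal_boundary X = {{W. ideal_bdry_comp X W \<and> ibc_equiv V W} | V. ideal_bdry_comp X V}"

definition ib_points_in :: "'a topology \<Rightarrow> 'a set \<Rightarrow> (nat \<Rightarrow> 'a set) set set" where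
  "ib_points_in X A = {b \<in> ideal_boundary X. \<exists>V\<in>b. \<exists>n0. \<forall>n\<ge>n0. V n \<subseteq> A}"

definition ideal_completion :: "'a topology \<Rightarrow> ('a + (nat \<Rightarrow> 'a set) set) topology" where
  "ideal_completion X = topology_generated_by
     {Inl ` A \<union> Inr ` ib_points_in X A | A.
        openin X A \<and> connectedin X A \<and> compactin X (X frontier_of A)}"

definition rel_compact_ibp :: "'a topology \<Rightarrow> 'a set \<Rightarrow> (nat \<Rightarrow> 'a set) set \<Rightarrow> bool" where
  "rel_compact_ibp S U b \<longleftrightarrow> (\<exists>V\<in>b. \<exists>n. compactin S (S closure_of (V n)))"

end

theory Submission
  imports Defs
begin


lemma lc_open_top_of_set:
  fixes T :: "'b::real_normed_vector set"
  assumes "open T"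
  shows "locally_connected_space (top_of_set T)"
  unfolding locally_connected_space
proof (intro allI impI)
  fix V x assume h: "openin (top_of_set T) V \<and> x \<in> V"
  then have "open V" using assms openin_open_eq by blast
  then obtain e where e: "e > 0" "ball x e \<subseteq> V" using h open_contains_ball by blast
  have "V \<subseteq> T" using h openin_imp_subset by blast
  show "\<exists>U. openin (top_of_set T) U \<and> connectedin (top_of_set T) U \<and> x \<in> U \<and> U \<subseteq> V"
    apply (rule exI[of _ "ball x e"])
    using e \<open>V \<subseteq> T\<close> by (auto simp: connectedin_subtopology openin_open_eq[OF assms])
qed

lemma surface_lc:
  assumes "surface S"
  shows "locally_connected_space S \<and> locally_compact_space S"
proof
  show "locally_connected_space S"
    unfolding locally_connected_space
  proof (intro allI impI)
    fix V x assume h: "openin S V \<and> x \<in> V"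
    then have "x \<in> topspace S" using openin_subset by blast
    then obtain W T where W: "openin S W" "x \<in> W" "open (T::(real^2) set)"
       "subtopology S W homeomorphic_space top_of_set T"
      using assms unfolding surface_def by blast
    have "locally_connected_space (subtopology S W)"
      using homeomorphic_locally_connected_space[OF W(4)] lc_open_top_of_set[OF W(3)] by blast
    moreover have "openin (subtopology S W) (V \<inter> W)"
      using h W(1) by (simp add: openin_open_subtopology openin_Int)
    ultimately obtain U where U: "openin (subtopology S W) U" "connectedin (subtopology S W) U" "x \<in> U" "U \<subseteq> V \<inter> W"
      using h W(2) unfolding locally_connected_space by blast
    show "\<exists>U. openin S U \<and> connectedin S U \<and> x \<in> U \<and> U \<subseteq> V"
      using U W(1) by (meson connectedin_subtopology le_infE openin_trans_full)
  qed
  show "locally_compact_space S"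
    unfolding locally_compact_space_def
  proof
    fix x assume "x \<in> topspace S"
    then obtain W T where W: "openin S W" "x \<in> W" "open (T::(real^2) set)"
       "subtopology S W homeomorphic_space top_of_set T"
      using assms unfolding surface_def by blast
    have "locally_compact_space (top_of_set T)"
      by (rule locally_compact_space_open_subset) (auto simp: locally_compact_space_euclidean W(3))
    then have "locally_compact_space (subtopology S W)"
      using homeomorphic_locally_compact_space[OF W(4)] by blast
    moreover have "x \<in> topspace (subtopology S W)" using W(2) \<open>x \<in> topspace S\<close> by simp
    ultimately obtain U C where "openin (subtopology S W) U" "compactin (subtopology S W) C" "x \<in> U" "U \<subseteq> C"
      unfolding locally_compact_space_def by blast
    then show "\<exists>U K. openin S U \<and> compactin S K \<and> x \<in> U \<and> U \<subseteq> K"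
      using W(1) by (meson compactin_subtopology openin_trans_full)
  qed
qed

lemma finite_union_in_compact:
  assumes "finite F" "\<And>V. V \<in> F \<Longrightarrow> \<exists>C. compactin S C \<and> V \<subseteq> C"
  shows "\<exists>C. compactin S C \<and> \<Union>F \<subseteq> C"
  using assms
proof (induction F rule: finite_induct)
  case empty
  have "compactin S {}" by simp
  then show ?case by blast
next
  case (insert V F)
  obtain C1 where c1: "compactin S C1" "V \<subseteq> C1" using insert.prems by blast
  have "\<And>W. W \<in> F \<Longrightarrow> \<exists>C. compactin S C \<and> W \<subseteq> C" using insert.prems by blast
  then have "\<exists>C. compactin S C \<and> \<Union>F \<subseteq> C" by (rule insert.IH)
  then obtain C2 where c2: "compactin S C2" "\<Union>F \<subseteq> C2" by (elim exE conjE)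
  have "compactin S (C1 \<union> C2)" by (rule compactin_Un[OF c1(1) c2(1)])
  moreover have "\<Union>(insert V F) \<subseteq> C1 \<union> C2" using c1(2) c2(2) by blast
  ultimately show ?case by blast
qed

lemma compact_nbhd:
  assumes "Hausdorff_space S" "locally_compact_space S" "compactin S K"
  obtains N where "openin S N" "K \<subseteq> N" "compactin S (S closure_of N)"
proof -
  define \<U> where "\<U> = {V. openin S V \<and> (\<exists>C. compactin S C \<and> V \<subseteq> C)}"
  have "K \<subseteq> \<Union>\<U>"
  proof
    fix x assume "x \<in> K"
    then have "x \<in> topspace S" using assms(3) compactin_subset_topspace by blast
    then obtain V C where "openin S V" "compactin S C" "x \<in> V" "V \<subseteq> C"
      using assms(2) unfolding locally_compact_space_def by blast
    then have "V \<in> \<U>" unfolding \<U>_def by blast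
    then show "x \<in> \<Union>\<U>" using \<open>x \<in> V\<close> by blast
  qed
  moreover have "\<forall>V\<in>\<U>. openin S V" by (simp add: \<U>_def)
  ultimately obtain F where F: "finite F" "F \<subseteq> \<U>" "K \<subseteq> \<Union>F"
    using assms(3) unfolding compactin_def by meson
  have "\<And>V. V \<in> F \<Longrightarrow> \<exists>C. compactin S C \<and> V \<subseteq> C" using F(2) unfolding \<U>_def by blast
  then obtain C where C: "compactin S C" "\<Union>F \<subseteq> C"
    using finite_union_in_compact[OF F(1)] by blast
  have "openin S (\<Union>F)" using F(2) unfolding \<U>_def by (intro openin_Union) blast
  moreover have "compactin S (S closure_of (\<Union>F))"
  proof (rule closed_compactin[OF C(1)])
    show "S closure_of \<Union> F \<subseteq> C"
      using C assms(1) closure_of_minimal compactin_imp_closedin by blast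
  qed simp
  ultimately show ?thesis using F(3) that by blast
qed




theorem proposition4p2:
  fixes S :: "'a topology" and K U :: "'a set" and \<alpha> :: "real \<Rightarrow> 'a" and p :: 'a
  assumes "surface S" and "connected_space S"
    and "compactin S K" and "connectedin S K"
    and "residual_domain S K U"
    and "continuous_map (top_of_set {0<..1}) (subtopology S U) \<alpha>"
    and "p \<in> K"
    and "limitin S \<alpha> p (at 0 within {0<..1})"
  shows "\<exists>b \<in> ideal_boundary (subtopology S U).
           rel_compact_ibp S U b \<and>
           limitin (ideal_completion (subtopology S U)) (Inl \<circ> \<alpha>) (Inr b) (at 0 within {0<..1})"
proof -
  define X where "X = subtopology S U"
  have surf: "Hausdorff_space S" "second_countable S" using assms(1) unfolding surface_def by auto
  have LC: "locally_connected_space S" and LK: "locally_compact_space S" using surface_lc[OF assms(1)] by auto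
  have Kc: "closedin S K" using compactin_imp_closedin[OF surf(1) assms(3)] .
  have Ucomp: "U \<in> connected_components_of (subtopology S (topspace S - K))"
    using assms(5) unfolding residual_domain_def .
  have U_sub: "U \<subseteq> topspace S - K" using connected_components_of_subset[OF Ucomp] by simp
  have U_conn: "connectedin S U"
    using connectedin_connected_components_of[OF Ucomp] connectedin_subtopology by blast
  have SK_open: "openin S (topspace S - K)" using Kc unfolding closedin_def by blast
  have U_open: "openin S U"
    using LC SK_open Ucomp locally_connected_space_open_connected_components by blast
  have "closedin (subtopology S (topspace S - K)) U" by (rule closedin_connected_components_of[OF Ucomp])
  then obtain CU where CU: "closedin S CU" "U = CU \<inter> (topspace S - K)"
    unfolding closedin_subtopology by blast
  have clU: "S closure_of U \<subseteq> CU" using CU by (simp add: closure_of_minimal)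
  have topX: "topspace X = U" using openin_subset[OF U_open] unfolding X_def by auto
  have \<alpha>U: "\<alpha> t \<in> U" if "t \<in> {0<..1}" for t
    using continuous_map_image_subset_topspace[OF assms(6)] topX that unfolding X_def by auto
  have pU: "p \<notin> U" using assms(7) U_sub by blast
  obtain N0 where N0: "openin S N0" "K \<subseteq> N0" "compactin S (S closure_of N0)"
    using compact_nbhd[OF surf(1) LK assms(3)] by blast
  obtain B where B: "countable B" "\<forall>V\<in>B. openin S V"
     "\<forall>W x. openin S W \<and> x \<in> W \<longrightarrow> (\<exists>V\<in>B. x \<in> V \<and> V \<subseteq> W)"
    using surf(2) unfolding second_countable_def by blast
  define F where "F = insert {} {V\<in>B. S closure_of V \<inter> K = {}}"
  have F_cnt: "countable F" unfolding F_def using B(1) by simp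
  have F_ne: "F \<noteq> {}" unfolding F_def by simp
  have F_prop: "\<forall>V\<in>F. openin S V \<and> S closure_of V \<inter> K = {}" unfolding F_def using B(2) by auto
  have F_cov: "topspace S - K \<subseteq> \<Union>F"
  proof
    fix x assume x: "x \<in> topspace S - K"
    then have "compactin S {x}" "disjnt {x} K" by (auto simp: disjnt_def)
    then obtain O1 O2 where Osep: "openin S O1" "openin S O2" "{x} \<subseteq> O1" "K \<subseteq> O2" "disjnt O1 O2"
      using Hausdorff_space_compact_separation[OF surf(1) _ assms(3)] by metis
    then obtain V where V: "V \<in> B" "x \<in> V" "V \<subseteq> O1" using B(3) by blast
    have "V \<subseteq> topspace S - O2" using V(3) Osep(1,5) openin_subset unfolding disjnt_def by blast
    moreover have "closedin S (topspace S - O2)" using Osep(2) by blast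
    ultimately have "S closure_of V \<subseteq> topspace S - O2" by (rule closure_of_minimal)
    then have "S closure_of V \<inter> K = {}" using Osep(4) by blast
    then have "V \<in> F" unfolding F_def using V(1) by blast
    then show "x \<in> \<Union>F" using V(2) by blast
  qed
  define b where "b = from_nat_into F"
  have b_range: "range b = F" unfolding b_def using range_from_nat_into[OF F_ne F_cnt] .
  have b_open: "openin S (b i)" for i using F_prop b_range by blast
  have b_clK: "S closure_of (b i) \<inter> K = {}" for i using F_prop b_range by blast
  have b_cov: "topspace S - K \<subseteq> (\<Union>i. b i)" using F_cov b_range by simp
  define N where "N n = N0 - S closure_of (\<Union>i\<le>n. b i)" for n
  have N_open: "openin S (N n)" for n unfolding N_def using openin_diff[OF N0(1) closedin_closure_of] .
  have cl_union: "S closure_of (\<Union>i\<le>n. b i) \<subseteq> (\<Union>i\<le>n. S closure_of (b i))" for n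
  proof (rule closure_of_minimal)
    show "(\<Union>i\<le>n. b i) \<subseteq> (\<Union>i\<le>n. S closure_of b i)"
      using closure_of_subset[OF openin_subset[OF b_open]] by blast
    show "closedin S (\<Union>i\<le>n. S closure_of b i)" by (intro closedin_Union) auto
  qed
  have K_N: "K \<subseteq> N n" for n
    using cl_union[of n] b_clK N0(2) unfolding N_def by blast
  have N_mono: "N n \<subseteq> N m" if "m \<le> n" for m n
  proof -
    have "(\<Union>i\<le>m. b i) \<subseteq> (\<Union>i\<le>n. b i)" using that by (intro UN_mono) auto
    then have "S closure_of (\<Union>i\<le>m. b i) \<subseteq> S closure_of (\<Union>i\<le>n. b i)" by (rule closure_of_mono)
    then show ?thesis unfolding N_def by blast
  qed
  have N_N0: "N n \<subseteq> N0" for n unfolding N_def by blast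
  have N_b: "N n \<inter> b i = {}" if "i \<le> n" for i n
  proof -
    have "b i \<subseteq> (\<Union>i\<le>n. b i)" using that by blast
    also have "\<dots> \<subseteq> S closure_of (\<Union>i\<le>n. b i)"
      by (rule closure_of_subset) (use openin_subset[OF b_open] in blast)
    finally show ?thesis unfolding N_def by blast
  qed
  have frN: "S frontier_of N n = S closure_of N n - N n" for n
    unfolding frontier_of_def using interior_of_openin[OF N_open] by simp
  have Nfr: "N n \<inter> S frontier_of N n = {}" for n using frN by blast
  have frN_K: "S frontier_of N n \<inter> K = {}" for n using Nfr K_N by blast
  have tails: "\<forall>n. \<exists>t. 0 < t \<and> t \<le> 1 \<and> (\<forall>s\<in>{0<..t}. \<alpha> s \<in> N n)"
  proof
    fix n
    have "p \<in> N n" using K_N assms(7) by blast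
    then have "eventually (\<lambda>x. \<alpha> x \<in> N n) (at 0 within {0<..1})"
      using assms(8) N_open unfolding limitin_def by blast
    then obtain d where d: "d > 0" "\<forall>x\<in>{0<..1}. x \<noteq> 0 \<and> dist x 0 < d \<longrightarrow> \<alpha> x \<in> N n"
      unfolding eventually_at by blast
    show "\<exists>t. 0 < t \<and> t \<le> 1 \<and> (\<forall>s\<in>{0<..t}. \<alpha> s \<in> N n)"
    proof (intro exI conjI ballI)
      show "0 < min 1 (d/2)" using d by simp
      show "min 1 (d/2) \<le> 1" by simp
      fix s assume s: "s \<in> {0<..min 1 (d/2)}"
      then show "\<alpha> s \<in> N n" using d(2) by (auto simp: dist_real_def)
    qed
  qed
  obtain \<tau> where \<tau>: "\<forall>n. 0 < \<tau> n \<and> \<tau> n \<le> 1 \<and> (\<forall>s\<in>{0<..\<tau> n}. \<alpha> s \<in> N n)"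
    using choice[OF tails] by blast
  define G where "G n = U - S frontier_of N n" for n
  define V where "V n = connected_component_of_set (subtopology S (G n)) (\<alpha> (\<tau> n))" for n
  have G_open: "openin S (G n)" for n unfolding G_def using openin_diff[OF U_open closedin_frontier_of] .
  have tailG: "\<alpha> s \<in> G n" if "s \<in> {0<..\<tau> n}" for n s
  proof -
    have "\<tau> n \<le> 1" using \<tau> by blast
    then have "s \<in> {0<..1}" using that by auto
    then have "\<alpha> s \<in> U" by (rule \<alpha>U)
    moreover have "\<alpha> s \<in> N n" using that \<tau> by blast
    ultimately show ?thesis unfolding G_def using Nfr by blast
  qed
  have tail_conn: "connectedin S (\<alpha> ` {0<..t})" if "0 < t" "t \<le> 1" for t
  proof -
    have "connectedin (top_of_set {0<..1}) {0<..t}"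
      using that by (auto simp: connectedin_subtopology)
    then have "connectedin (subtopology S U) (\<alpha> ` {0<..t})"
      by (rule connectedin_continuous_map_image[OF assms(6)])
    then show ?thesis by (simp add: connectedin_subtopology)
  qed
  have \<tau>in: "\<tau> n \<in> {0<..\<tau> n}" for n
  proof -
    have "0 < \<tau> n" using \<tau> by blast
    then show ?thesis by simp
  qed
  have tailV: "\<alpha> s \<in> V n" if "s \<in> {0<..\<tau> n}" for n s
  proof -
    have c: "connectedin S (\<alpha> ` {0<..\<tau> n})" using tail_conn \<tau> by blast
    have "\<alpha> ` {0<..\<tau> n} \<subseteq> G n" using tailG by blast
    then have "connectedin (subtopology S (G n)) (\<alpha> ` {0<..\<tau> n})"
      using c by (simp add: connectedin_subtopology)
    moreover have "\<alpha> (\<tau> n) \<in> \<alpha> ` {0<..\<tau> n}" using \<tau>in by blast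
    ultimately have "\<alpha> ` {0<..\<tau> n} \<subseteq> V n" unfolding V_def by (rule connected_component_of_maximal)
    then show ?thesis using that by blast
  qed
  have V_ne: "\<alpha> (\<tau> n) \<in> V n" for n using tailV \<tau>in by blast
  have V_G: "V n \<subseteq> G n" and V_connS: "connectedin S (V n)" for n
    using connectedin_connected_component_of[of "subtopology S (G n)" "\<alpha> (\<tau> n)"]
    unfolding V_def connectedin_subtopology by auto
  have V_open: "openin S (V n)" for n
    unfolding V_def using locally_connected_B[OF LC] G_open tailG \<tau>in by blast
  have V_U: "V n \<subseteq> U" for n using V_G unfolding G_def by blast
  have V_N: "V n \<subseteq> N n" for n
  proof -
    have sep: "separatedin S (N n) (topspace S - S closure_of N n)"
      unfolding separatedin_def
    proof (intro conjI)
      show "N n \<subseteq> topspace S" using openin_subset[OF N_open] .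
      show "topspace S - S closure_of N n \<subseteq> topspace S" by blast
      have "S closure_of (topspace S - S closure_of N n) \<subseteq> topspace S - N n"
      proof (rule closure_of_minimal)
        show "topspace S - S closure_of N n \<subseteq> topspace S - N n"
          using closure_of_subset[OF openin_subset[OF N_open]] by blast
        show "closedin S (topspace S - N n)" using N_open by blast
      qed
      then show "N n \<inter> S closure_of (topspace S - S closure_of N n) = {}" by blast
      show "(topspace S - S closure_of N n) \<inter> S closure_of N n = {}" by blast
    qed
    have "V n \<subseteq> N n \<union> (topspace S - S closure_of N n)"
      using V_G openin_subset[OF U_open] unfolding G_def frN by blast
    then have "V n \<subseteq> N n \<or> V n \<subseteq> topspace S - S closure_of N n"
      using connectedin_subset_separated_union[OF V_connS sep] by blast
    moreover have "\<alpha> (\<tau> n) \<in> N n" using \<tau> \<tau>in by blast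
    moreover have "N n \<subseteq> S closure_of N n"
      using closure_of_subset[OF openin_subset[OF N_open]] .
    ultimately show ?thesis using V_ne by blast
  qed
  have V_dec: "V (Suc n) \<subseteq> V n" for n
  proof -
    define s where "s = min (\<tau> n) (\<tau> (Suc n))"
    have "0 < \<tau> n" "0 < \<tau> (Suc n)" using \<tau> by blast+
    then have s1: "s \<in> {0<..\<tau> n}" and s2: "s \<in> {0<..\<tau> (Suc n)}" unfolding s_def by auto
    have "V (Suc n) \<subseteq> G n"
      using V_N[of "Suc n"] N_mono[of n "Suc n"] V_U[of "Suc n"] Nfr[of n] unfolding G_def by auto
    then have "connectedin (subtopology S (G n)) (V (Suc n))"
      using V_connS by (simp add: connectedin_subtopology)
    then have "V (Suc n) \<subseteq> connected_component_of_set (subtopology S (G n)) (\<alpha> s)"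
      using tailV[OF s2] by (rule connected_component_of_maximal)
    moreover have "connected_component_of (subtopology S (G n)) (\<alpha> (\<tau> n)) (\<alpha> s)"
      using tailV[OF s1] unfolding V_def by simp
    then have "connected_component_of (subtopology S (G n)) (\<alpha> (\<tau> n)) = connected_component_of (subtopology S (G n)) (\<alpha> s)"
      using connected_component_of_equiv by metis
    then have "V n = connected_component_of_set (subtopology S (G n)) (\<alpha> s)"
      unfolding V_def by simp
    ultimately show ?thesis by blast
  qed
  have nontriv: "\<not> trivial_limit (at (0::real) within {0<..1})"
    by (simp add: trivial_limit_within)
  have ev_V: "eventually (\<lambda>x. \<alpha> x \<in> V m) (at 0 within {0<..1})" for m
    unfolding eventually_at
  proof (intro exI[of _ "\<tau> m"] conjI ballI impI)
    show "0 < \<tau> m" using \<tau> by blast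
    fix x :: real assume "x \<in> {0<..1}" "x \<noteq> 0 \<and> dist x 0 < \<tau> m"
    then have "x \<in> {0<..\<tau> m}" by (auto simp: dist_real_def)
    then show "\<alpha> x \<in> V m" by (rule tailV)
  qed
  have V_openX: "openin X (V n)" for n
    unfolding X_def using openin_open_subtopology[OF U_open] V_open V_U by blast
  have FN_eq: "U \<inter> S frontier_of N n = S closure_of U \<inter> S frontier_of N n" for n
  proof
    show "U \<inter> S frontier_of N n \<subseteq> S closure_of U \<inter> S frontier_of N n"
      using closure_of_subset[OF openin_subset[OF U_open]] by blast
    show "S closure_of U \<inter> S frontier_of N n \<subseteq> U \<inter> S frontier_of N n"
    proof
      fix x assume x: "x \<in> S closure_of U \<inter> S frontier_of N n"
      then have "x \<in> topspace S" using frontier_of_subset_topspace[of S "N n"] by blast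
      moreover have "x \<notin> K" using x frN_K by blast
      moreover have "x \<in> CU" using x clU by blast
      ultimately show "x \<in> U \<inter> S frontier_of N n" using x CU(2) by blast
    qed
  qed
  have FN_comp: "compactin X (U \<inter> S frontier_of N n)" for n
  proof -
    have "compactin S (S closure_of U \<inter> S frontier_of N n)"
    proof (rule closed_compactin[OF N0(3)])
      have "S frontier_of N n \<subseteq> S closure_of N n" using frN by blast
      also have "\<dots> \<subseteq> S closure_of N0" using N_N0 by (rule closure_of_mono)
      finally show "S closure_of U \<inter> S frontier_of N n \<subseteq> S closure_of N0" by blast
      show "closedin S (S closure_of U \<inter> S frontier_of N n)"
        by (intro closedin_Int closedin_closure_of closedin_frontier_of)
    qed
    then have "compactin S (U \<inter> S frontier_of N n)" using FN_eq[of n] by simp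
    then show ?thesis unfolding X_def compactin_subtopology by blast
  qed
  have fr_sub: "X frontier_of V n \<subseteq> U \<inter> S frontier_of N n" for n
  proof
    fix x assume x: "x \<in> X frontier_of V n"
    have clX: "X closure_of V n = U \<inter> S closure_of V n"
      unfolding X_def by (rule closure_of_subtopology_open) (use U_open in blast)
    have "x \<in> X closure_of V n" "x \<notin> V n"
      using x interior_of_openin[OF V_openX] unfolding frontier_of_def by auto
    then have xU: "x \<in> U" and xcl: "x \<in> S closure_of V n" using clX by auto
    show "x \<in> U \<inter> S frontier_of N n"
    proof (rule ccontr)
      assume "x \<notin> U \<inter> S frontier_of N n"
      then have xG: "x \<in> G n" using xU unfolding G_def by blast
      have "closedin (subtopology S (G n)) (V n)" unfolding V_def by (rule closedin_connected_component_of)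
      then obtain T where T: "closedin S T" "V n = T \<inter> G n" unfolding closedin_subtopology by blast
      then have "S closure_of V n \<subseteq> T" by (simp add: closure_of_minimal)
      then have "x \<in> V n" using xcl xG T(2) by blast
      then show False using \<open>x \<notin> V n\<close> by blast
    qed
  qed
  have ibc: "ideal_bdry_comp X V"
    unfolding ideal_bdry_comp_def
  proof (intro conjI allI impI)
    show "decseq V" using V_dec by (rule decseq_SucI)
    fix n
    show "V n \<noteq> {}" using V_ne by blast
    show "openin X (V n)" by (rule V_openX)
    show "connectedin X (V n)" unfolding X_def using V_connS V_U by (simp add: connectedin_subtopology)
    show "compactin X (X frontier_of V n)"
      using closed_compactin[OF FN_comp fr_sub closedin_frontier_of] .
    show "\<not> compactin X (X closure_of V n)"
    proof
      assume c: "compactin X (X closure_of V n)"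
      then have cS: "compactin S (X closure_of V n)" and cU: "X closure_of V n \<subseteq> U"
        unfolding X_def compactin_subtopology by auto
      have "closedin S (X closure_of V n)" using compactin_imp_closedin[OF surf(1) cS] .
      moreover have sub: "V n \<subseteq> X closure_of V n" using closure_of_subset V_U topX by metis
      have "eventually (\<lambda>x. \<alpha> x \<in> X closure_of V n) (at 0 within {0<..1})"
        by (rule eventually_mono[OF ev_V[of n]]) (use sub in blast)
      ultimately have "p \<in> X closure_of V n"
        using limitin_closedin[OF assms(8)] nontriv by blast
      then show False using cU pU by blast
    qed
  next
    fix C assume C: "compactin X C"
    then have CS: "compactin S C" and CU': "C \<subseteq> U" unfolding X_def compactin_subtopology by auto
    have "C \<subseteq> \<Union>(range b)" using CU' U_sub b_cov by blast
    moreover have "\<forall>W\<in>range b. openin S W" using b_open by blast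
    ultimately obtain \<F> where \<F>: "finite \<F>" "\<F> \<subseteq> range b" "C \<subseteq> \<Union>\<F>"
      using CS unfolding compactin_def by meson
    then obtain I where I: "finite I" "\<F> = b ` I" using finite_subset_image by metis
    then obtain n0 where n0: "I \<subseteq> {..n0}" using finite_nat_iff_bounded_le by blast
    show "\<exists>n0. \<forall>n\<ge>n0. C \<inter> V n = {}"
    proof (intro exI allI impI)
      fix n assume "n0 \<le> n"
      show "C \<inter> V n = {}"
      proof (rule ccontr)
        assume "C \<inter> V n \<noteq> {}"
        then obtain x where x: "x \<in> C" "x \<in> V n" by blast
        then obtain i where "i \<in> I" "x \<in> b i" using \<F>(3) I(2) by blast
        then have "i \<le> n" using n0 \<open>n0 \<le> n\<close> by auto
        then show False using N_b[of i n] V_N[of n] x \<open>x \<in> b i\<close> by blast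
      qed
    qed
  qed
  define bp where "bp = {W. ideal_bdry_comp X W \<and> ibc_equiv V W}"
  have V_bp: "V \<in> bp" unfolding bp_def ibc_equiv_def using ibc by blast
  have bp_ib: "bp \<in> ideal_boundary X" unfolding ideal_boundary_def bp_def using ibc by blast
  have "rel_compact_ibp S U bp"
    unfolding rel_compact_ibp_def
  proof (intro bexI exI)
    have "V 0 \<subseteq> N0" using V_N N_N0 by blast
    then have "S closure_of V 0 \<subseteq> S closure_of N0" by (rule closure_of_mono)
    then show "compactin S (S closure_of V 0)"
      using closed_compactin[OF N0(3)] closedin_closure_of by blast
    show "V \<in> bp" by (rule V_bp)
  qed
  moreover have "limitin (ideal_completion X) (Inl \<circ> \<alpha>) (Inr bp) (at 0 within {0<..1})"
  proof -
    define Bs where "Bs = {Inl ` A \<union> Inr ` ib_points_in X A | A.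
        openin X A \<and> connectedin X A \<and> compactin X (X frontier_of A)}"
    have IC: "ideal_completion X = topology_generated_by Bs" unfolding ideal_completion_def Bs_def ..
    have UA1: "openin X U" using openin_topspace[of X] topX by simp
    have UA2: "connectedin X U" unfolding X_def using U_conn by (simp add: connectedin_subtopology)
    have "X frontier_of U = {}" using frontier_of_topspace[of X] topX by simp
    then have UA3: "compactin X (X frontier_of U)" by simp
    have "bp \<in> ib_points_in X U" unfolding ib_points_in_def using bp_ib V_bp V_U by blast
    moreover have "Inl ` U \<union> Inr ` ib_points_in X U \<in> Bs" unfolding Bs_def using UA1 UA2 UA3 by blast
    ultimately have top: "Inr bp \<in> topspace (ideal_completion X)"
      unfolding IC topology_generated_by_topspace by blast
    have gen: "eventually (\<lambda>x. Inl (\<alpha> x) \<in> Q) (at 0 within {0<..1})"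
      if "generate_topology_on Bs Q" "Inr bp \<in> Q" for Q
      using that
    proof (induction rule: generate_topology_on.induct)
      case Empty
      then show ?case by simp
    next
      case (Int a c)
      have ea: "eventually (\<lambda>x. Inl (\<alpha> x) \<in> a) (at 0 within {0<..1})" using Int by blast
      have ec: "eventually (\<lambda>x. Inl (\<alpha> x) \<in> c) (at 0 within {0<..1})" using Int by blast
      show ?case using eventually_conj[OF ea ec] by simp
    next
      case (UN KK)
      then obtain k where k: "k \<in> KK" "Inr bp \<in> k" by blast
      then have "eventually (\<lambda>x. Inl (\<alpha> x) \<in> k) (at 0 within {0<..1})" using UN by blast
      then show ?case by (rule eventually_mono) (use k in blast)
    next
      case (Basis s)
      then obtain A where A: "s = Inl ` A \<union> Inr ` ib_points_in X A" unfolding Bs_def by blast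
      then have "bp \<in> ib_points_in X A" using Basis.prems by blast
      then obtain W n0 where W: "W \<in> bp" "\<forall>n\<ge>n0. W n \<subseteq> A" unfolding ib_points_in_def by blast
      then have "ibc_equiv V W" unfolding bp_def by blast
      then obtain m where m: "V m \<subseteq> W n0" unfolding ibc_equiv_def by blast
      have sub: "V m \<subseteq> A" using m W(2) by blast
      show ?case unfolding A by (rule eventually_mono[OF ev_V[of m]]) (use sub in blast)
    qed
    show ?thesis unfolding limitin_def
    proof (intro conjI allI impI)
      show "Inr bp \<in> topspace (ideal_completion X)" by (rule top)
      fix Q assume "openin (ideal_completion X) Q \<and> Inr bp \<in> Q"
      then have "generate_topology_on Bs Q" "Inr bp \<in> Q"
        unfolding IC openin_topology_generated_by_iff by auto
      then show "eventually (\<lambda>x. (Inl \<circ> \<alpha>) x \<in> Q) (at 0 within {0<..1})"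
        using gen by simp
    qed
  qed
  ultimately show ?thesis using bp_ib unfolding X_def by blast
qed


end
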